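(* Let $q\ge2$, $\mathcal{S}$ an SLP deriving $T$ with $|T|\ge q$, and $\phi$ a fingerprint function that is collision free on the substrings of length $q-1$ of $T$ (i.e. for any two length-$(q-1)$ substrings $u,v$ of $T$, $\phi(u)=\phi(v)$ iff $u=v$). Let $G$ be the graph constructed from $\mathcal{S}$ by inserting relevant substrings, and let $C$ be the CS-tree built from $G$, both as described in the context. Then $C$ contains each distinct q-gram of $T$ exactly once, i.e., for each distinct q-gram $s$ of $T$ there is exactly one downward path of $q$ edges in $C$ whose edge labels, read from top to bottom, spell $s$.
   Context: Strings are 0-indexed; $s[i:j]$ is the substring from position $i$ to $j$ inclusive. An SLP is a set of rules $X_1,\dots,X_n$, each $X_i=a$ or $X_i=X_lX_r$ ($l,r<i$); $t_{X_i}$ is the derived string, $|X_i|=|t_{X_i}|$, $T=t_{X_n}$; $occ(X_i)$ is the number of occurrences of $X_i$ in the derivation tree. For $X_i=X_lX_r$ with $|X_i|\ge q$, $r_{X_i}=t_{X_i}[\max(0,|X_l|-q+1):\min(|X_l|+q-2,|X_i|-1)]$. Construction of $G$: start with an empty directed graph whose nodes are keyed by fingerprints. For each rule $X_i=X_lX_r$ with $|X_i|\ge q$ (any order), with $r=r_{X_i}$: create node $\phi(r[0:q-2])$ if absent; for $j=1,\dots,|r|-q+1$, create node $\phi(r[j:j+q-2])$ if absent, create an edge labelled $r[j+q-2]$ with counter $0$ from node $\phi(r[j-1:j+q-3])$ to node $\phi(r[j:j+q-2])$ if no edge in that direction between them exists, and add $occ(X_i)$ to its counter. The start node is the node labelled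 $\phi(T[0:q-2])$. Construction of the CS-tree $C$ (a rooted tree with characters on edges): create a path of $q-1$ edges from a root $u_0$ down to $u_{q-1}$, the edge $u_{j-1}\to u_j$ labelled $T[j-1]$; $u_{q-1}$ corresponds to the start node of $G$ and gets its label. Do a depth-first traversal of $G$ from the start node along directed edges; when exploring an edge of $G$ from node $x$ (with tree node $\tau(x)$) to node $y$ having label $c$ and counter $m$: if $y$ is unvisited, create a tree node $\tau(y)$ as a child of $\tau(x)$ via an edge labelled $c$ with counter $m$, give $\tau(y)$ the fingerprint label of $y$, and continue the traversal from $y$; if $y$ was already visited, create a new leaf child of $\tau(x)$ via an edge labelled $c$ with counter $m$, labelled with the fingerprint label of $y$.
   Formalization: The SLP $\mathcal{S}$ satisfies $occ(X_i)>0$ for every rule $X_i$, that is, every rule of $\mathcal{S}$ occurs in the derivation tree of $T$. The paper assumes this as well. *)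

theory Defs
  imports Main
begin

text \<open>Strings are lists, 0-indexed. substr s i j is s[i:j] (inclusive).\<close>
definition substr :: "'a list \<Rightarrow> nat \<Rightarrow> nat \<Rightarrow> 'a list" where
  "substr s i j = take (Suc j - i) (drop i s)"

text \<open>SLP rules X_0,...,X_{n-1} (0-based); X_i = a or X_i = X_l X_r with l,r < i.\<close>
datatype 'a rule = RTerm 'a | RPair nat nat

definition slp_wf :: "'a rule list \<Rightarrow> bool" where
  "slp_wf rs \<longleftrightarrow> rs \<noteq> [] \<and>
     (\<forall>i < length rs. \<forall>l r. rs ! i = RPair l r \<longrightarrow> l < i \<and> r < i)"

function deriv :: "'a rule list \<Rightarrow> nat \<Rightarrow> 'a list" where
  "deriv rs i = (if i < length rs then
      (case rs ! i of RTerm a \<Rightarrow> [a]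
       | RPair l r \<Rightarrow> if l < i \<and> r < i then deriv rs l @ deriv rs r else [])
     else [])"
  by pat_completeness auto
termination by (relation "measure snd") auto

declare deriv.simps[simp del]

definition slp_T :: "'a rule list \<Rightarrow> 'a list" where
  "slp_T rs = deriv rs (length rs - 1)"

function occ_in :: "'a rule list \<Rightarrow> nat \<Rightarrow> nat \<Rightarrow> nat" where
  "occ_in rs j i = (if j < length rs then
      (if j = i then 1 else 0) +
      (case rs ! j of RTerm a \<Rightarrow> 0
       | RPair l r \<Rightarrow> if l < j \<and> r < j then occ_in rs l i + occ_in rs r i else 0)
     else 0)"
  by pat_completeness auto
termination by (relation "measure (\<lambda>(rs, j, i). j)") auto

declare occ_in.simps[simp del]

definition occ :: "'a rule list \<Rightarrow> nat \<Rightarrow> nat" where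
  "occ rs i = occ_in rs (length rs - 1) i"

text \<open>r_{X_i} for X_i = X_l X_r:
  t_{X_i}[max(0,|X_l|-q+1) : min(|X_l|+q-2, |X_i|-1)].\<close>
definition rstr :: "'a rule list \<Rightarrow> nat \<Rightarrow> nat \<Rightarrow> 'a list" where
  "rstr rs q i = (case rs ! i of RTerm a \<Rightarrow> []
     | RPair l r \<Rightarrow> (let t = deriv rs i; a = length (deriv rs l) in
          substr t (a + 1 - q) (min (a + q - 2) (length t - 1))))"

text \<open>Nodes: set of fingerprints; edges: map from (source,target) to (label, counter).\<close>
type_synonym ('a, 'f) graph = "'f set \<times> ('f \<times> 'f \<Rightarrow> ('a \<times> nat) option)"

definition add_edge :: "('a, 'f) graph \<Rightarrow> 'f \<Rightarrow> 'f \<Rightarrow> 'a \<Rightarrow> nat \<Rightarrow> ('a, 'f) graph" where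
  "add_edge G u v c m = (let (N, E) = G in
     (insert v N,
      (case E (u, v) of None \<Rightarrow> E((u, v) \<mapsto> (c, m))
       | Some (c', k) \<Rightarrow> E((u, v) \<mapsto> (c', k + m)))))"

definition process_r ::
  "('a list \<Rightarrow> 'f) \<Rightarrow> nat \<Rightarrow> 'a list \<Rightarrow> nat \<Rightarrow> ('a, 'f) graph \<Rightarrow> ('a, 'f) graph" where
  "process_r \<phi> q r m G =
     foldl (\<lambda>G' j. add_edge G' (\<phi> (substr r (j - 1) (j + q - 3))) (\<phi> (substr r j (j + q - 2)))
                      (r ! (j + q - 2)) m)
       (fst G \<union> {\<phi> (substr r 0 (q - 2))}, snd G)
       [1..<length r + 2 - q]"

definition valid_order :: "'a rule list \<Rightarrow> nat \<Rightarrow> nat list \<Rightarrow> bool" where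
  "valid_order rs q ord \<longleftrightarrow> distinct ord \<and>
     set ord = {i. i < length rs \<and> (\<exists>l r. rs ! i = RPair l r) \<and> q \<le> length (deriv rs i)}"

definition build_G :: "('a list \<Rightarrow> 'f) \<Rightarrow> nat \<Rightarrow> 'a rule list \<Rightarrow> nat list \<Rightarrow> ('a, 'f) graph" where
  "build_G \<phi> q rs ord = foldl (\<lambda>G i. process_r \<phi> q (rstr rs q i) (occ rs i) G) ({}, Map.empty) ord"

text \<open>Tree nodes are 0..<tn (0 is the root); tedges holds (parent, label, child);
  tcnt gives the counter of the edge entering a node; tlab the fingerprint label.
  vis maps visited graph nodes to their tree node tau; stk is the DFS stack;
  expl the set of already explored graph edges.\<close>
record ('a, 'f) dfs_state =
  tn :: nat
  tedges :: "(nat \<times> 'a \<times> nat) set"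
  tcnt :: "nat \<Rightarrow> nat option"
  tlab :: "nat \<Rightarrow> 'f option"
  vis :: "'f \<Rightarrow> nat option"
  stk :: "('f \<times> nat) list"
  expl :: "('f \<times> 'f) set"

definition dfs_init :: "('a list \<Rightarrow> 'f) \<Rightarrow> nat \<Rightarrow> 'a list \<Rightarrow> ('a, 'f) dfs_state" where
  "dfs_init \<phi> q T =
     \<lparr> tn = q,
       tedges = {(j - 1, T ! (j - 1), j) | j. 1 \<le> j \<and> j \<le> q - 1},
       tcnt = Map.empty,
       tlab = [q - 1 \<mapsto> \<phi> (substr T 0 (q - 2))],
       vis = [\<phi> (substr T 0 (q - 2)) \<mapsto> q - 1],
       stk = [(\<phi> (substr T 0 (q - 2)), q - 1)],
       expl = {} \<rparr>"

inductive dfs_step :: "('f \<times> 'f \<Rightarrow> ('a \<times> nat) option) \<Rightarrow> ('a, 'f) dfs_state \<Rightarrow> ('a, 'f) dfs_state \<Rightarrow> bool"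
  for E where
  tree_edge: "\<lbrakk> stk S = (x, tx) # rest; E (x, y) = Some (c, m); (x, y) \<notin> expl S; vis S y = None \<rbrakk>
    \<Longrightarrow> dfs_step E S
         (S\<lparr> tn := Suc (tn S), tedges := insert (tx, c, tn S) (tedges S),
             tcnt := (tcnt S)(tn S \<mapsto> m), tlab := (tlab S)(tn S \<mapsto> y),
             vis := (vis S)(y \<mapsto> tn S), stk := (y, tn S) # (x, tx) # rest,
             expl := insert (x, y) (expl S) \<rparr>)"
| leaf_edge: "\<lbrakk> stk S = (x, tx) # rest; E (x, y) = Some (c, m); (x, y) \<notin> expl S; vis S y \<noteq> None \<rbrakk>
    \<Longrightarrow> dfs_step E S
         (S\<lparr> tn := Suc (tn S), tedges := insert (tx, c, tn S) (tedges S),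
             tcnt := (tcnt S)(tn S \<mapsto> m), tlab := (tlab S)(tn S \<mapsto> y),
             expl := insert (x, y) (expl S) \<rparr>)"
| finish: "\<lbrakk> stk S = (x, tx) # rest; \<forall>y. E (x, y) \<noteq> None \<longrightarrow> (x, y) \<in> expl S \<rbrakk>
    \<Longrightarrow> dfs_step E S (S\<lparr> stk := rest \<rparr>)"

definition qgrams :: "nat \<Rightarrow> 'a list \<Rightarrow> 'a list set" where
  "qgrams q T = {substr T i (i + q - 1) | i. i + q \<le> length T}"

definition collision_free :: "('a list \<Rightarrow> 'f) \<Rightarrow> nat \<Rightarrow> 'a list \<Rightarrow> bool" where
  "collision_free \<phi> q T \<longleftrightarrow>
     (\<forall>u \<in> qgrams (q - 1) T. \<forall>v \<in> qgrams (q - 1) T. \<phi> u = \<phi> v \<longleftrightarrow> u = v)"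

definition is_path :: "(nat \<times> 'a \<times> nat) set \<Rightarrow> nat list \<Rightarrow> 'a list \<Rightarrow> bool" where
  "is_path Ed vs s \<longleftrightarrow> length vs = Suc (length s) \<and>
     (\<forall>i < length s. (vs ! i, s ! i, vs ! Suc i) \<in> Ed)"

end

theory Submission
  imports Defs
begin


definition fac :: "'a list \<Rightarrow> 'a list \<Rightarrow> bool" where
  "fac u t \<longleftrightarrow> (\<exists>ps ss. t = ps @ u @ ss)"

lemma fac_trans: "fac u v \<Longrightarrow> fac v w \<Longrightarrow> fac u w"
  unfolding fac_def by (metis append.assoc)

lemma fac_take_drop_self: "fac (take k (drop a t)) t"
  unfolding fac_def by (metis append_take_drop_id)

lemma fac_take_drop:
  assumes "t = ps @ w @ ss" "a \<le> length ps" "length ps + length w \<le> a + k"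
  shows "fac w (take k (drop a t))"
proof -
  have "drop a t = drop a ps @ w @ ss" using assms by simp
  hence "take k (drop a t) = drop a ps @ w @ take (k - (length ps - a) - length w) ss"
    using assms by (simp add: take_append)
  thus ?thesis unfolding fac_def by blast
qed

lemma qgrams_iff:
  assumes "1 \<le> k"
  shows "w \<in> qgrams k T \<longleftrightarrow> length w = k \<and> fac w T"
proof
  assume "w \<in> qgrams k T"
  then obtain i where i: "i + k \<le> length T" "w = substr T i (i + k - 1)"
    unfolding qgrams_def by auto
  hence w: "w = take k (drop i T)" using assms unfolding substr_def
    by (metis Suc_diff_le add_diff_cancel_left' diff_Suc_1 le_add1 le_add_diff_inverse nat_le_linear
         not_one_le_zero plus_1_eq_Suc add_Suc_right Nat.add_diff_assoc)
  show "length w = k \<and> fac w T" unfolding w using i(1)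
    by (simp add: fac_take_drop_self)
next
  assume "length w = k \<and> fac w T"
  then obtain ps ss where "T = ps @ w @ ss" "length w = k" unfolding fac_def by auto
  moreover have "substr T (length ps) (length ps + k - 1) = w"
    using calculation assms unfolding substr_def by simp
  ultimately show "w \<in> qgrams k T" unfolding qgrams_def
    by (smt (verit) le_add1 length_append mem_Collect_eq add.assoc)
qed

lemma deriv_pair: "i < length rs \<Longrightarrow> rs ! i = RPair l r \<Longrightarrow> l < i \<Longrightarrow> r < i \<Longrightarrow>
   deriv rs i = deriv rs l @ deriv rs r"
  by (subst deriv.simps) simp

lemma occ_fac: "0 < occ_in rs j i \<Longrightarrow> fac (deriv rs i) (deriv rs j)"
proof (induction j rule: less_induct)
  case (less j)
  show ?case
  proof (cases "j = i")
    case True thus ?thesis unfolding fac_def by (metis append.left_neutral append_Nil2)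
  next
    case False
    have jl: "j < length rs" using less.prems by (subst (asm) occ_in.simps) (auto split: if_splits)
    then obtain l r where lr: "rs ! j = RPair l r" "l < j" "r < j"
      using less.prems False by (subst (asm) occ_in.simps) (auto split: rule.splits if_splits)
    hence "0 < occ_in rs l i + occ_in rs r i"
      using less.prems False jl by (subst (asm) occ_in.simps) auto
    moreover have "deriv rs j = deriv rs l @ deriv rs r" using deriv_pair jl lr by blast
    ultimately show ?thesis using less.IH lr unfolding fac_def
      by (metis add_gr_0 append.assoc)
  qed
qed

lemma key_comb:
  assumes vo: "valid_order rs q ord" and q2: "2 \<le> q"
  shows "fac w (deriv rs j) \<Longrightarrow> length w = q \<Longrightarrow> \<exists>i \<in> set ord. fac w (rstr rs q i)"
proof (induction j arbitrary: w rule: less_induct)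
  case (less j)
  have jl: "j < length rs"
  proof (rule ccontr)
    assume "\<not> j < length rs" hence "deriv rs j = []" by (subst deriv.simps) simp
    thus False using less.prems q2 unfolding fac_def by simp
  qed
  show ?case
  proof (cases "rs ! j")
    case (RTerm a)
    hence "deriv rs j = [a]" using jl by (subst deriv.simps) simp
    hence "length w \<le> 1" using less.prems(1) unfolding fac_def
      by (metis One_nat_def Suc_leI le_add2 length_Cons length_append list.size(3) order_trans
          le_add1)
    thus ?thesis using less.prems q2 by simp
  next
    case (RPair l r)
    show ?thesis
    proof (cases "l < j \<and> r < j")
      case False
      have "deriv rs j = []" by (subst deriv.simps) (simp only: if_P[OF jl] RPair rule.case if_not_P[OF False])
      thus ?thesis using less.prems q2 unfolding fac_def by simp
    next
      case True
      define A where "A = deriv rs l"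
      define B where "B = deriv rs r"
      have dj: "deriv rs j = A @ B" unfolding A_def B_def using deriv_pair jl RPair True by blast
      obtain ps ss where pss: "A @ B = ps @ w @ ss" using less.prems(1) dj unfolding fac_def by auto
      show ?thesis
      proof (cases "length ps + q \<le> length A")
        case True
        hence "fac w A" using pss less.prems(2) unfolding fac_def
          by (metis append_eq_append_conv_if append_take_drop_id length_append take_append
              append.assoc)
        thus ?thesis using less.IH[of l w] \<open>l < j \<and> r < j\<close> less.prems(2) A_def by blast
      next
        case c1: False
        show ?thesis
        proof (cases "length A \<le> length ps")
          case True
          hence "fac w B" using pss unfolding fac_def
            by (metis append_eq_append_conv_if append.assoc)
          thus ?thesis using less.IH[of r w] \<open>l < j \<and> r < j\<close> less.prems(2) B_def by blast
        next
          case False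
          have jo: "j \<in> set ord" using vo jl RPair less.prems(2) c1 pss dj
            unfolding valid_order_def by (auto dest!: arg_cong[where f=length])
          have "rstr rs q j = substr (A @ B) (length A + 1 - q) (min (length A + q - 2) (length (A @ B) - 1))"
            unfolding rstr_def RPair using dj A_def by (simp add: Let_def)
          moreover have "fac w (take (Suc (min (length A + q - 2) (length (A @ B) - 1)) - (length A + 1 - q))
                   (drop (length A + 1 - q) (A @ B)))"
            apply (rule fac_take_drop[OF pss])
            using c1 False q2 less.prems(2) arg_cong[OF pss, of length] by auto
          ultimately have "fac w (rstr rs q j)" unfolding substr_def by simp
          thus ?thesis using jo by blast
        qed
      qed
    qed
  qed
qed



lemma snd_add_edge: "snd (add_edge G u v c m) =
  (snd G)((u, v) \<mapsto> (case snd G (u, v) of None \<Rightarrow> (c, m) | Some (c', k) \<Rightarrow> (c', k + m)))"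
  by (cases G) (auto simp: add_edge_def split: option.splits)

lemma pr_fold_dom:
  "\<forall>G0::('a,'f) graph. k \<in> dom (snd G0) \<or> (\<exists>j \<in> set xs. k = (\<phi> (substr r (j - 1) (j + q - 3)), \<phi> (substr r j (j + q - 2))))
   \<longrightarrow> k \<in> dom (snd (foldl (\<lambda>G' j. add_edge G' (\<phi> (substr r (j - 1) (j + q - 3))) (\<phi> (substr r j (j + q - 2)))
                      (r ! (j + q - 2)) m) G0 xs))"
proof (induction xs)
  case Nil thus ?case by simp
next
  case (Cons a xs)
  show ?case
  proof (intro allI impI)
    fix G0 :: "('a, 'f) graph"
    assume h: "k \<in> dom (snd G0) \<or> (\<exists>j \<in> set (a # xs). k = (\<phi> (substr r (j - 1) (j + q - 3)), \<phi> (substr r j (j + q - 2))))"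
    let ?G1 = "add_edge G0 (\<phi> (substr r (a - 1) (a + q - 3))) (\<phi> (substr r a (a + q - 2))) (r ! (a + q - 2)) m"
    have "k \<in> dom (snd ?G1) \<or> (\<exists>j \<in> set xs. k = (\<phi> (substr r (j - 1) (j + q - 3)), \<phi> (substr r j (j + q - 2))))"
      using h by (auto simp: snd_add_edge)
    thus "k \<in> dom (snd (foldl (\<lambda>G' j. add_edge G' (\<phi> (substr r (j - 1) (j + q - 3))) (\<phi> (substr r j (j + q - 2)))
                      (r ! (j + q - 2)) m) G0 (a # xs)))" using Cons.IH by (simp only: foldl_Cons)
  qed
qed

lemma pr_fold_P:
  "\<forall>G0::('a,'f) graph. (\<forall>k c n. snd G0 k = Some (c, n::nat) \<longrightarrow> P k c) \<and>
     (\<forall>j \<in> set xs. P (\<phi> (substr r (j - 1) (j + q - 3)), \<phi> (substr r j (j + q - 2))) (r ! (j + q - 2)))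
   \<longrightarrow> (\<forall>k c n. snd (foldl (\<lambda>G' j. add_edge G' (\<phi> (substr r (j - 1) (j + q - 3))) (\<phi> (substr r j (j + q - 2)))
                      (r ! (j + q - 2)) m) G0 xs) k = Some (c, n::nat) \<longrightarrow> P k c)"
proof (induction xs)
  case Nil thus ?case by simp
next
  case (Cons a xs)
  show ?case
  proof (rule allI, rule impI)
    fix G0 :: "('a, 'f) graph" assume h: "(\<forall>k c n. snd G0 k = Some (c, n::nat) \<longrightarrow> P k c) \<and>
     (\<forall>j \<in> set (a # xs). P (\<phi> (substr r (j - 1) (j + q - 3)), \<phi> (substr r j (j + q - 2))) (r ! (j + q - 2)))"
    let ?G1 = "add_edge G0 (\<phi> (substr r (a - 1) (a + q - 3))) (\<phi> (substr r a (a + q - 2))) (r ! (a + q - 2)) m"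
    have h1: "\<forall>k c n. snd ?G1 k = Some (c, n::nat) \<longrightarrow> P k c"
    proof (intro allI impI)
      fix k c n assume kc: "snd ?G1 k = Some (c, n::nat)"
      show "P k c"
      proof (cases "k = (\<phi> (substr r (a - 1) (a + q - 3)), \<phi> (substr r a (a + q - 2)))")
        case True
        show ?thesis
        proof (cases "snd G0 k")
          case None
          hence "c = r ! (a + q - 2)" using kc True by (simp add: snd_add_edge)
          thus ?thesis using h True by simp
        next
          case (Some p)
          then obtain c' k' where p: "snd G0 k = Some (c', k')" by (cases p) auto
          hence "c = c'" using kc True by (simp add: snd_add_edge)
          thus ?thesis using h p by blast
        qed
      next
        case False
        hence "snd G0 k = Some (c, n)" using kc by (simp add: snd_add_edge)
        thus ?thesis using h by blast
      qed
    qed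
    have h2: "\<forall>j \<in> set xs. P (\<phi> (substr r (j - 1) (j + q - 3)), \<phi> (substr r j (j + q - 2))) (r ! (j + q - 2))"
      using h by simp
    show "\<forall>k c n. snd (foldl (\<lambda>G' j. add_edge G' (\<phi> (substr r (j - 1) (j + q - 3))) (\<phi> (substr r j (j + q - 2)))
                      (r ! (j + q - 2)) m) G0 (a # xs)) k = Some (c, n::nat) \<longrightarrow> P k c"
      using Cons.IH[THEN spec, of ?G1] h1 h2 unfolding foldl_Cons by blast
  qed
qed

lemma pr_dom_old: assumes "k \<in> dom (snd G)" shows "k \<in> dom (snd (process_r \<phi> q r m G))"
  unfolding process_r_def by (rule pr_fold_dom[rule_format], rule disjI1) (simp add: assms)

lemma pr_dom_new: assumes "j \<in> set [1..<length r + 2 - q]" shows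
  "(\<phi> (substr r (j - 1) (j + q - 3)), \<phi> (substr r j (j + q - 2))) \<in> dom (snd (process_r \<phi> q r m G))"
  unfolding process_r_def by (rule pr_fold_dom[rule_format], rule disjI2) (use assms in blast)

lemma pr_P: "(\<forall>k c n. snd G k = Some (c, n::nat) \<longrightarrow> P k c) \<Longrightarrow>
   (\<forall>j \<in> set [1..<length r + 2 - q]. P (\<phi> (substr r (j - 1) (j + q - 3)), \<phi> (substr r j (j + q - 2))) (r ! (j + q - 2)))
   \<Longrightarrow> snd (process_r \<phi> q r m G) k = Some (c, n) \<Longrightarrow> P k c"
proof -
  assume a1: "\<forall>k c n. snd G k = Some (c, n::nat) \<longrightarrow> P k c" and
    a2: "\<forall>j \<in> set [1..<length r + 2 - q]. P (\<phi> (substr r (j - 1) (j + q - 3)), \<phi> (substr r j (j + q - 2))) (r ! (j + q - 2))"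
    and a3: "snd (process_r \<phi> q r m G) k = Some (c, n)"
  show "P k c"
    using pr_fold_P[where P=P and r=r and \<phi>=\<phi> and q=q and xs="[1..<length r + 2 - q]" and m=m, rule_format, of "(fst G \<union> {\<phi> (substr r 0 (q - 2))}, snd G)" k c n]
      a1 a2 a3 unfolding process_r_def by simp
qed

lemma bG_dom:
  "\<forall>G0::('a,'f) graph. k \<in> dom (snd G0) \<or> (\<exists>i \<in> set ord. \<exists>j \<in> set [1..<length (rstr rs q i) + 2 - q].
       k = (\<phi> (substr (rstr rs q i) (j - 1) (j + q - 3)), \<phi> (substr (rstr rs q i) j (j + q - 2))))
   \<longrightarrow> k \<in> dom (snd (foldl (\<lambda>G i. process_r \<phi> q (rstr rs q i) (occ rs i) G) G0 ord))"
proof (induction ord)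
  case Nil thus ?case by simp
next
  case (Cons a ord)
  show ?case
  proof (rule allI, rule impI)
    fix G0 :: "('a, 'f) graph"
    assume h: "k \<in> dom (snd G0) \<or> (\<exists>i \<in> set (a # ord). \<exists>j \<in> set [1..<length (rstr rs q i) + 2 - q].
       k = (\<phi> (substr (rstr rs q i) (j - 1) (j + q - 3)), \<phi> (substr (rstr rs q i) j (j + q - 2))))"
    let ?G1 = "process_r \<phi> q (rstr rs q a) (occ rs a) G0"
    have "k \<in> dom (snd ?G1) \<or> (\<exists>i \<in> set ord. \<exists>j \<in> set [1..<length (rstr rs q i) + 2 - q].
       k = (\<phi> (substr (rstr rs q i) (j - 1) (j + q - 3)), \<phi> (substr (rstr rs q i) j (j + q - 2))))"
    proof -
      have h': "k \<in> dom (snd G0) \<or> (\<exists>j \<in> set [1..<length (rstr rs q a) + 2 - q].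
         k = (\<phi> (substr (rstr rs q a) (j - 1) (j + q - 3)), \<phi> (substr (rstr rs q a) j (j + q - 2)))) \<or>
         (\<exists>i \<in> set ord. \<exists>j \<in> set [1..<length (rstr rs q i) + 2 - q].
       k = (\<phi> (substr (rstr rs q i) (j - 1) (j + q - 3)), \<phi> (substr (rstr rs q i) j (j + q - 2))))"
        using h unfolding list.set(2) bex_simps(5) by assumption
      from h' show ?thesis
      proof (elim disjE bexE)
        assume "k \<in> dom (snd G0)"
        thus ?thesis by (rule disjI1[OF pr_dom_old])
      next
        fix j assume j: "j \<in> set [1..<length (rstr rs q a) + 2 - q]" and
          kk: "k = (\<phi> (substr (rstr rs q a) (j - 1) (j + q - 3)), \<phi> (substr (rstr rs q a) j (j + q - 2)))"
        show ?thesis unfolding kk by (rule disjI1, rule pr_dom_new[OF j])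
      next
        fix i j assume "i \<in> set ord" "j \<in> set [1..<length (rstr rs q i) + 2 - q]"
          "k = (\<phi> (substr (rstr rs q i) (j - 1) (j + q - 3)), \<phi> (substr (rstr rs q i) j (j + q - 2)))"
        thus ?thesis by (intro disjI2 bexI)
      qed
    qed
    thus "k \<in> dom (snd (foldl (\<lambda>G i. process_r \<phi> q (rstr rs q i) (occ rs i) G) G0 (a # ord)))"
      unfolding foldl_Cons by (rule Cons.IH[THEN spec, THEN mp])
  qed
qed

lemma bG_P:
  "\<forall>G0::('a,'f) graph. (\<forall>k c n. snd G0 k = Some (c, n::nat) \<longrightarrow> P k c) \<and>
    (\<forall>i \<in> set ord. \<forall>j \<in> set [1..<length (rstr rs q i) + 2 - q].
       P (\<phi> (substr (rstr rs q i) (j - 1) (j + q - 3)), \<phi> (substr (rstr rs q i) j (j + q - 2))) (rstr rs q i ! (j + q - 2)))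
   \<longrightarrow> (\<forall>k c n. snd (foldl (\<lambda>G i. process_r \<phi> q (rstr rs q i) (occ rs i) G) G0 ord) k = Some (c, n::nat) \<longrightarrow> P k c)"
proof (induction ord)
  case Nil thus ?case by simp
next
  case (Cons a ord)
  show ?case
  proof (rule allI, rule impI)
    fix G0 :: "('a, 'f) graph" assume h: "(\<forall>k c n. snd G0 k = Some (c, n::nat) \<longrightarrow> P k c) \<and>
    (\<forall>i \<in> set (a # ord). \<forall>j \<in> set [1..<length (rstr rs q i) + 2 - q].
       P (\<phi> (substr (rstr rs q i) (j - 1) (j + q - 3)), \<phi> (substr (rstr rs q i) j (j + q - 2))) (rstr rs q i ! (j + q - 2)))"
    have h1: "\<forall>k c n. snd (process_r \<phi> q (rstr rs q a) (occ rs a) G0) k = Some (c, n::nat) \<longrightarrow> P k c"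
    proof (intro allI impI)
      fix k c n assume "snd (process_r \<phi> q (rstr rs q a) (occ rs a) G0) k = Some (c, n::nat)"
      thus "P k c" apply (rule pr_P[rotated 2]) using h by simp_all
    qed
    have h2: "\<forall>i \<in> set ord. \<forall>j \<in> set [1..<length (rstr rs q i) + 2 - q].
       P (\<phi> (substr (rstr rs q i) (j - 1) (j + q - 3)), \<phi> (substr (rstr rs q i) j (j + q - 2))) (rstr rs q i ! (j + q - 2))"
      using h by simp
    show "\<forall>k c n. snd (foldl (\<lambda>G i. process_r \<phi> q (rstr rs q i) (occ rs i) G) G0 (a # ord)) k = Some (c, n::nat) \<longrightarrow> P k c"
      using Cons.IH[THEN spec, of "process_r \<phi> q (rstr rs q a) (occ rs a) G0"] h1 h2 unfolding foldl_Cons by blast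
  qed
qed

lemma window:
  assumes "1 \<le> j" "j + q - 1 \<le> length r" "2 \<le> q"
  shows "substr r (j - 1) (j + q - 3) = take (q - 1) (take q (drop (j - 1) r))"
    "substr r j (j + q - 2) = drop 1 (take q (drop (j - 1) r))"
    "r ! (j + q - 2) = take q (drop (j - 1) r) ! (q - 1)"
    "length (take q (drop (j - 1) r)) = q"
proof -
  have e0: "Suc (j + q - 3) - (j - 1) = q - 1" using assms by simp
  show "substr r (j - 1) (j + q - 3) = take (q - 1) (take q (drop (j - 1) r))"
    unfolding substr_def e0 by simp
  have e1: "Suc (j + q - 2) - j = q - 1" using assms by simp
  have e2: "drop 1 (drop (j - 1) r) = drop j r" using assms(1) by simp
  have "drop 1 (take q (drop (j - 1) r)) = take (q - 1) (drop 1 (drop (j - 1) r))"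
    by (simp add: drop_take)
  thus "substr r j (j + q - 2) = drop 1 (take q (drop (j - 1) r))"
    unfolding substr_def e1 e2 by simp
  have e3: "j + q - 2 = (j - 1) + (q - 1)" using assms by simp
  show "r ! (j + q - 2) = take q (drop (j - 1) r) ! (q - 1)"
    unfolding e3 using assms by simp
  show "length (take q (drop (j - 1) r)) = q" using assms by simp
qed



lemma qg_take: assumes "2 \<le> q" "w \<in> qgrams q T" shows "take (q - 1) w \<in> qgrams (q - 1) T"
proof -
  have "length w = q" "fac w T" using assms qgrams_iff[of q w T] by auto
  moreover have "fac (take (q - 1) w) w" unfolding fac_def by (metis append_Nil append_take_drop_id)
  ultimately show ?thesis using assms qgrams_iff[of "q - 1"] fac_trans by fastforce
qed

lemma qg_drop: assumes "2 \<le> q" "w \<in> qgrams q T" shows "drop 1 w \<in> qgrams (q - 1) T"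
proof -
  have "length w = q" "fac w T" using assms qgrams_iff[of q w T] by auto
  moreover have "fac (drop 1 w) w" unfolding fac_def by (metis append_Nil2 append_take_drop_id)
  ultimately show ?thesis using assms qgrams_iff[of "q - 1"] fac_trans by fastforce
qed

lemma w_eq: assumes "length w = q" "length s = q" "1 \<le> q" "take (q - 1) w = take (q - 1) s"
  "w ! (q - 1) = s ! (q - 1)" shows "w = s"
proof (rule nth_equalityI)
  show "length w = length s" using assms by simp
  fix i assume "i < length w"
  show "w ! i = s ! i"
  proof (cases "i < q - 1")
    case True thus ?thesis using assms(4) by (metis nth_take)
  next
    case False hence "i = q - 1" using \<open>i < length w\<close> assms by simp
    thus ?thesis using assms by simp
  qed
qed

lemma rstr_fac: "fac (rstr rs q i) (deriv rs i)"
proof (cases "rs ! i")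
  case (RTerm a) thus ?thesis unfolding rstr_def fac_def by (metis append_Nil rule.simps(5))
next
  case (RPair l r) thus ?thesis unfolding rstr_def substr_def by (simp add: Let_def fac_take_drop_self)
qed

lemma deriv_fac_T: assumes "\<forall>i < length rs. 0 < occ rs i" "i < length rs"
  shows "fac (deriv rs i) (slp_T rs)"
  using assms occ_fac unfolding occ_def slp_T_def by blast

lemma graph_P:
  assumes q2: "2 \<le> q" and occp: "\<forall>i < length rs. 0 < occ rs i" and vo: "valid_order rs q ord"
    and E: "snd (build_G \<phi> q rs ord) (x, y) = Some (c, m)"
  shows "\<exists>w \<in> qgrams q (slp_T rs). x = \<phi> (take (q - 1) w) \<and> y = \<phi> (drop 1 w) \<and> c = w ! (q - 1)"
proof -
  define P where "P = (\<lambda>k c'. \<exists>w \<in> qgrams q (slp_T rs). fst k = \<phi> (take (q - 1) w) \<and> snd k = \<phi> (drop 1 w) \<and> c' = w ! (q - 1))"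
  have h2: "\<forall>i \<in> set ord. \<forall>j \<in> set [1..<length (rstr rs q i) + 2 - q].
       P (\<phi> (substr (rstr rs q i) (j - 1) (j + q - 3)), \<phi> (substr (rstr rs q i) j (j + q - 2))) (rstr rs q i ! (j + q - 2))"
  proof (intro ballI)
    fix i j assume i: "i \<in> set ord" and j: "j \<in> set [1..<length (rstr rs q i) + 2 - q]"
    define r where "r = rstr rs q i"
    have j1: "1 \<le> j" "j + q - 1 \<le> length r" using j q2 unfolding r_def by auto
    define w where "w = take q (drop (j - 1) r)"
    have il: "i < length rs" using i vo unfolding valid_order_def by auto
    have "fac w r" unfolding w_def by (rule fac_take_drop_self)
    hence "fac w (slp_T rs)" using rstr_fac deriv_fac_T[OF occp il] fac_trans unfolding r_def by blast
    hence wq: "w \<in> qgrams q (slp_T rs)" using qgrams_iff[of q w] q2 window(4)[OF j1 q2] unfolding w_def by auto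
    show "P (\<phi> (substr (rstr rs q i) (j - 1) (j + q - 3)), \<phi> (substr (rstr rs q i) j (j + q - 2))) (rstr rs q i ! (j + q - 2))"
      unfolding P_def r_def[symmetric] using wq window(1-3)[OF j1 q2] unfolding w_def[symmetric] by auto
  qed
  have "P (x, y) c"
    using bG_P[where P=P and ord=ord and rs=rs and q=q and \<phi>=\<phi>, THEN spec, of "({}, Map.empty)", THEN mp]
      h2 E unfolding build_G_def by auto
  thus ?thesis unfolding P_def by simp
qed

lemma graph_E:
  assumes q2: "2 \<le> q" and occp: "\<forall>i < length rs. 0 < occ rs i" and vo: "valid_order rs q ord"
    and s: "s \<in> qgrams q (slp_T rs)"
  shows "snd (build_G \<phi> q rs ord) (\<phi> (take (q - 1) s), \<phi> (drop 1 s)) \<noteq> None"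
proof -
  have sl: "length s = q" "fac s (deriv rs (length rs - 1))" using s q2 qgrams_iff[of q s] unfolding slp_T_def by auto
  obtain i where i: "i \<in> set ord" "fac s (rstr rs q i)" using key_comb[OF vo q2 sl(2) sl(1)] by blast
  define r where "r = rstr rs q i"
  obtain ps ss where r: "r = ps @ s @ ss" using i(2) unfolding fac_def r_def by blast
  define j where "j = length ps + 1"
  have jr: "j \<in> set [1..<length r + 2 - q]" using r sl(1) q2 unfolding j_def by (cases ss) auto
  have j1: "1 \<le> j" "j + q - 1 \<le> length r" using r sl q2 unfolding j_def by auto
  have ws: "take q (drop (j - 1) r) = s" using r sl unfolding j_def by simp
  have "(\<phi> (substr r (j - 1) (j + q - 3)), \<phi> (substr r j (j + q - 2))) \<in> dom (snd (build_G \<phi> q rs ord))"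
    unfolding build_G_def
    by (rule bG_dom[THEN spec, THEN mp], rule disjI2) (use i(1) jr[unfolded r_def] in \<open>unfold r_def, blast\<close>)
  thus ?thesis using window(1,2)[OF j1 q2] ws by auto
qed



lemma last_len: "length vs = Suc n \<Longrightarrow> last vs = vs ! n"
  by (cases vs rule: rev_cases) (auto simp: nth_append)

lemma path_mono: "is_path Ed vs s \<Longrightarrow> Ed \<subseteq> Ed' \<Longrightarrow> is_path Ed' vs s"
  unfolding is_path_def by blast

lemma path_snoc: assumes "is_path Ed vs s" "(last vs, c, v) \<in> Ed"
  shows "is_path Ed (vs @ [v]) (s @ [c])"
  unfolding is_path_def
proof (intro conjI allI impI)
  show "length (vs @ [v]) = Suc (length (s @ [c]))" using assms(1) unfolding is_path_def by simp
  fix i assume i: "i < length (s @ [c])"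
  have lv: "length vs = Suc (length s)" using assms(1) unfolding is_path_def by simp
  show "((vs @ [v]) ! i, (s @ [c]) ! i, (vs @ [v]) ! Suc i) \<in> Ed"
  proof (cases "i < length s")
    case True thus ?thesis using assms(1) lv unfolding is_path_def by (simp add: nth_append)
  next
    case False hence "i = length s" using i by simp
    moreover have "last vs = vs ! length s" using lv by (rule last_len)
    ultimately show ?thesis using assms(2) lv by (simp add: nth_append)
  qed
qed

lemma path_tl: assumes "is_path Ed vs s" "s \<noteq> []" shows "is_path Ed (tl vs) (tl s)"
  using assms unfolding is_path_def by (simp add: nth_tl)

lemma path_take: assumes "is_path Ed vs s" "k \<le> length s"
  shows "is_path Ed (take (Suc k) vs) (take k s)"
  using assms unfolding is_path_def by simp

lemma path_incr: assumes "\<forall>p c ch. (p, c, ch) \<in> Ed \<longrightarrow> p < ch" "is_path Ed vs s"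
  shows "k \<le> length s \<Longrightarrow> k \<le> vs ! k"
proof (induction k)
  case 0 thus ?case by simp
next
  case (Suc k)
  have "(vs ! k, s ! k, vs ! Suc k) \<in> Ed" using assms(2) Suc.prems unfolding is_path_def by simp
  hence "vs ! k < vs ! Suc k" using assms(1) by blast
  thus ?case using Suc by simp
qed

lemma path_unique:
  assumes up: "\<forall>p c ch p' c'. (p, c, ch) \<in> Ed \<longrightarrow> (p', c', ch) \<in> Ed \<longrightarrow> p = p' \<and> c = c'"
    and P1: "is_path Ed vs s" and P2: "is_path Ed vs' s'" and ls: "length s = length s'"
    and lst: "last vs = last vs'"
  shows "vs = vs' \<and> s = s'"
proof -
  let ?n = "length s"
  have l1: "length vs = Suc ?n" "length vs' = Suc ?n" using P1 P2 ls unfolding is_path_def by auto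
  have vv: "k \<le> ?n \<Longrightarrow> vs ! (?n - k) = vs' ! (?n - k)" for k
  proof (induction k)
    case 0 thus ?case using lst last_len[OF l1(1)] last_len[OF l1(2)] by simp
  next
    case (Suc k)
    let ?i = "?n - Suc k"
    have i: "?i < ?n" "Suc ?i = ?n - k" using Suc.prems by auto
    have ch: "vs ! Suc ?i = vs' ! Suc ?i" using Suc.IH Suc.prems i(2) by simp
    have e1: "(vs ! ?i, s ! ?i, vs ! Suc ?i) \<in> Ed" and e2: "(vs' ! ?i, s' ! ?i, vs ! Suc ?i) \<in> Ed"
      using P1 P2 i ls ch unfolding is_path_def by auto
    show ?case using up[rule_format, OF e1 e2] by simp
  qed
  have v: "vs = vs'"
  proof (rule nth_equalityI)
    show "length vs = length vs'" using l1 by simp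
    fix i assume "i < length vs"
    hence "i = ?n - (?n - i)" "?n - i \<le> ?n" using l1 by auto
    thus "vs ! i = vs' ! i" using vv by metis
  qed
  have "s = s'"
  proof (rule nth_equalityI)
    show "length s = length s'" by fact
    fix i assume i: "i < length s"
    have e1: "(vs ! i, s ! i, vs ! Suc i) \<in> Ed" and e2: "(vs ! i, s' ! i, vs ! Suc i) \<in> Ed"
      using P1 P2 i ls v unfolding is_path_def by auto
    show "s ! i = s' ! i" using up[rule_format, OF e1 e2] by simp
  qed
  thus ?thesis using v by simp
qed

definition dinv :: "('a list \<Rightarrow> 'f) \<Rightarrow> nat \<Rightarrow> 'a list \<Rightarrow> ('f \<times> 'f \<Rightarrow> ('a \<times> nat) option) \<Rightarrow> ('a, 'f) dfs_state \<Rightarrow> bool" where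
  "dinv \<phi> q T E S \<longleftrightarrow>
    q \<le> tn S \<and>
    (\<forall>p c ch. (p, c, ch) \<in> tedges S \<longrightarrow> p < ch \<and> ch < tn S) \<and>
    (\<forall>p c ch p' c'. (p, c, ch) \<in> tedges S \<longrightarrow> (p', c', ch) \<in> tedges S \<longrightarrow> p = p' \<and> c = c') \<and>
    (\<forall>x p. vis S x = Some p \<longrightarrow> p < tn S) \<and>
    (\<forall>x x' p. vis S x = Some p \<longrightarrow> vis S x' = Some p \<longrightarrow> x = x') \<and>
    (\<forall>x tx. (x, tx) \<in> set (stk S) \<longrightarrow> vis S x = Some tx) \<and>
    (\<forall>x y. (x, y) \<in> expl S \<longrightarrow> vis S y \<noteq> None) \<and>
    (\<forall>x y. vis S x \<noteq> None \<longrightarrow> x \<notin> fst ` set (stk S) \<longrightarrow> E (x, y) \<noteq> None \<longrightarrow> (x, y) \<in> expl S) \<and>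
    (\<forall>x p. vis S x = Some p \<longrightarrow> (\<exists>vs u. is_path (tedges S) vs u \<and> length u = q - 1 \<and> last vs = p \<and>
        u \<in> qgrams (q - 1) T \<and> \<phi> u = x)) \<and>
    (\<forall>p c v. (p, c, v) \<in> tedges S \<longrightarrow> q \<le> v \<longrightarrow>
        (\<exists>x y m. vis S x = Some p \<and> tlab S v = Some y \<and> (x, y) \<in> expl S \<and> E (x, y) = Some (c, m))) \<and>
    (\<forall>p c v c' v'. (p, c, v) \<in> tedges S \<longrightarrow> (p, c', v') \<in> tedges S \<longrightarrow> q \<le> v \<longrightarrow> q \<le> v' \<longrightarrow>
        tlab S v = tlab S v' \<longrightarrow> v = v') \<and>
    (\<forall>x y. (x, y) \<in> expl S \<longrightarrow> (\<exists>p c v m. vis S x = Some p \<and> (p, c, v) \<in> tedges S \<and> q \<le> v \<and> E (x, y) = Some (c, m))) \<and>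
    vis S (\<phi> (take (q - 1) T)) \<noteq> None"

lemma substr0: "2 \<le> q \<Longrightarrow> substr T 0 (q - 2) = take (q - 1) T"
  unfolding substr_def by (simp add: Suc_diff_Suc numeral_2_eq_2)

lemma dinv_init: assumes q2: "2 \<le> q" and qT: "q \<le> length T"
  shows "dinv \<phi> q T E (dfs_init \<phi> q T)"
proof -
  let ?Ed = "{(j - 1, T ! (j - 1), j) | j. 1 \<le> j \<and> j \<le> q - 1}"
  have path: "is_path ?Ed [0..<q] (take (q - 1) T)"
    unfolding is_path_def using q2 qT
    by (auto intro!: exI[where x="Suc _"])
  have "fac (take (q - 1) T) T" unfolding fac_def by (metis append_Nil append_take_drop_id)
  hence qg: "take (q - 1) T \<in> qgrams (q - 1) T"
    using qgrams_iff[of "q - 1" "take (q - 1) T" T] q2 qT by simp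
  have "\<exists>vs u. is_path ?Ed vs u \<and> length u = q - 1 \<and> last vs = q - 1 \<and>
        u \<in> qgrams (q - 1) T \<and> \<phi> u = \<phi> (take (q - 1) T)"
    using path qg q2 qT by (intro exI[of _ "[0..<q]"] exI[of _ "take (q - 1) T"]) auto
  thus ?thesis unfolding dinv_def dfs_init_def substr0[OF q2] using q2 by auto
qed

lemma cf_eq: "collision_free \<phi> q T \<Longrightarrow> u \<in> qgrams (q - 1) T \<Longrightarrow> v \<in> qgrams (q - 1) T \<Longrightarrow> \<phi> u = \<phi> v \<Longrightarrow> u = v"
  unfolding collision_free_def by blast

lemma w_split: assumes "length w = q" "2 \<le> q"
  shows "drop 1 w = drop 1 (take (q - 1) w) @ [w ! (q - 1)]" "take (q - 1) w \<noteq> []"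
proof -
  have "w = take (q - 1) w @ [w ! (q - 1)]" using assms take_Suc_conv_app_nth[of "q - 1" w] by simp
  moreover have "length (take (q - 1) w) \<ge> 1" using assms by simp
  ultimately show "drop 1 w = drop 1 (take (q - 1) w) @ [w ! (q - 1)]"
    by (metis drop_append One_nat_def append_Nil diff_is_0_eq drop0)
  show "take (q - 1) w \<noteq> []" using assms by (cases w) auto
qed

lemma new_path:
  assumes GA: "\<forall>x y c m. E (x, y) = Some (c, m) \<longrightarrow> (\<exists>w \<in> qgrams q T. x = \<phi> (take (q - 1) w) \<and> y = \<phi> (drop 1 w) \<and> c = w ! (q - 1))"
    and CF: "collision_free \<phi> q T" and q2: "2 \<le> q"
    and P: "is_path Ed vs u" "length u = q - 1" "last vs = tx" "u \<in> qgrams (q - 1) T" "\<phi> u = x"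
    and Exy: "E (x, y) = Some (c, m)" and ed: "(tx, c, n) \<in> Ed"
  shows "\<exists>vs' u'. is_path Ed vs' u' \<and> length u' = q - 1 \<and> last vs' = n \<and> u' \<in> qgrams (q - 1) T \<and> \<phi> u' = y"
proof -
  obtain w where w: "w \<in> qgrams q T" "x = \<phi> (take (q - 1) w)" "y = \<phi> (drop 1 w)" "c = w ! (q - 1)"
    using GA Exy by blast
  have lw: "length w = q" using w(1) qgrams_iff[of q w T] q2 by simp
  have "u = take (q - 1) w" using cf_eq[OF CF P(4) qg_take[OF q2 w(1)]] P(5) w(2) by simp
  hence u': "tl (u @ [c]) = drop 1 w" using w_split[OF lw q2] w(4) by (simp add: drop_Suc)
  have "is_path Ed (vs @ [n]) (u @ [c])" using path_snoc[OF P(1)] P(3) ed by simp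
  hence "is_path Ed (tl (vs @ [n])) (tl (u @ [c]))" by (rule path_tl) simp
  moreover have "vs \<noteq> []" using P(1) unfolding is_path_def by auto
  ultimately show ?thesis using u' qg_drop[OF q2 w(1)] w(3) lw
    by (intro exI[of _ "tl (vs @ [n])"] exI[of _ "drop 1 w"]) auto
qed

lemma step_tree:
  assumes inv: "dinv \<phi> q T E S"
    and GA: "\<forall>x y c m. E (x, y) = Some (c, m) \<longrightarrow> (\<exists>w \<in> qgrams q T. x = \<phi> (take (q - 1) w) \<and> y = \<phi> (drop 1 w) \<and> c = w ! (q - 1))"
    and CF: "collision_free \<phi> q T" and q2: "2 \<le> q"
    and st: "stk S = (x, tx) # rest" "E (x, y) = Some (c, m)" "(x, y) \<notin> expl S" "vis S y = None"
  shows "dinv \<phi> q T E (S\<lparr> tn := Suc (tn S), tedges := insert (tx, c, tn S) (tedges S),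
             tcnt := (tcnt S)(tn S \<mapsto> m), tlab := (tlab S)(tn S \<mapsto> y),
             vis := (vis S)(y \<mapsto> tn S), stk := (y, tn S) # (x, tx) # rest,
             expl := insert (x, y) (expl S) \<rparr>)" (is "dinv \<phi> q T E ?S'")
proof -
  define n where "n = tn S"
  have f: "tn ?S' = Suc n" "tedges ?S' = insert (tx, c, n) (tedges S)" "tlab ?S' = (tlab S)(n \<mapsto> y)"
    "vis ?S' = (vis S)(y \<mapsto> n)" "stk ?S' = (y, n) # (x, tx) # rest" "expl ?S' = insert (x, y) (expl S)"
    by (simp_all add: n_def)
  note Iall = inv[unfolded dinv_def n_def[symmetric]]
  have I0: "q \<le> n" by (rule Iall[THEN conjunct1])
  have I1: "\<forall>p c ch. (p, c, ch) \<in> tedges S \<longrightarrow> p < ch \<and> ch < n" by (rule Iall[THEN conjunct2, THEN conjunct1])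
  have I2: "\<forall>p c ch p' c'. (p, c, ch) \<in> tedges S \<longrightarrow> (p', c', ch) \<in> tedges S \<longrightarrow> p = p' \<and> c = c'" by (rule Iall[THEN conjunct2, THEN conjunct2, THEN conjunct1])
  have I3: "\<forall>x p. vis S x = Some p \<longrightarrow> p < n" by (rule Iall[THEN conjunct2, THEN conjunct2, THEN conjunct2, THEN conjunct1])
  have I4: "\<forall>x x' p. vis S x = Some p \<longrightarrow> vis S x' = Some p \<longrightarrow> x = x'" by (rule Iall[THEN conjunct2, THEN conjunct2, THEN conjunct2, THEN conjunct2, THEN conjunct1])
  have I5: "\<forall>x tx. (x, tx) \<in> set (stk S) \<longrightarrow> vis S x = Some tx" by (rule Iall[THEN conjunct2, THEN conjunct2, THEN conjunct2, THEN conjunct2, THEN conjunct2, THEN conjunct1])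
  have I6: "\<forall>x y. (x, y) \<in> expl S \<longrightarrow> vis S y \<noteq> None" by (rule Iall[THEN conjunct2, THEN conjunct2, THEN conjunct2, THEN conjunct2, THEN conjunct2, THEN conjunct2, THEN conjunct1])
  have I7: "\<forall>x y. vis S x \<noteq> None \<longrightarrow> x \<notin> fst ` set (stk S) \<longrightarrow> E (x, y) \<noteq> None \<longrightarrow> (x, y) \<in> expl S" by (rule Iall[THEN conjunct2, THEN conjunct2, THEN conjunct2, THEN conjunct2, THEN conjunct2, THEN conjunct2, THEN conjunct2, THEN conjunct1])
  have I8: "\<forall>x p. vis S x = Some p \<longrightarrow> (\<exists>vs u. is_path (tedges S) vs u \<and> length u = q - 1 \<and> last vs = p \<and>
        u \<in> qgrams (q - 1) T \<and> \<phi> u = x)" using Iall by blast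
  have I9: "\<forall>p c v. (p, c, v) \<in> tedges S \<longrightarrow> q \<le> v \<longrightarrow>
        (\<exists>x y m. vis S x = Some p \<and> tlab S v = Some y \<and> (x, y) \<in> expl S \<and> E (x, y) = Some (c, m))" using Iall by blast
  have I10: "\<forall>p c v c' v'. (p, c, v) \<in> tedges S \<longrightarrow> (p, c', v') \<in> tedges S \<longrightarrow> q \<le> v \<longrightarrow> q \<le> v' \<longrightarrow>
        tlab S v = tlab S v' \<longrightarrow> v = v'" using Iall by blast
  have I11: "\<forall>x y. (x, y) \<in> expl S \<longrightarrow> (\<exists>p c v m. vis S x = Some p \<and> (p, c, v) \<in> tedges S \<and> q \<le> v \<and> E (x, y) = Some (c, m))" by (rule Iall[THEN conjunct2, THEN conjunct2, THEN conjunct2, THEN conjunct2, THEN conjunct2, THEN conjunct2, THEN conjunct2, THEN conjunct2, THEN conjunct2, THEN conjunct2, THEN conjunct2, THEN conjunct1])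
  have I12: "vis S (\<phi> (take (q - 1) T)) \<noteq> None" by (rule Iall[THEN conjunct2, THEN conjunct2, THEN conjunct2, THEN conjunct2, THEN conjunct2, THEN conjunct2, THEN conjunct2, THEN conjunct2, THEN conjunct2, THEN conjunct2, THEN conjunct2, THEN conjunct2])
  have vx: "vis S x = Some tx" using I5 st(1) by simp
  have txn: "tx < n" using I3 vx by blast
  have xy: "x \<noteq> y" using vx st(4) by auto
  have C2: "\<forall>p c1 ch p' c2. (p, c1, ch) \<in> insert (tx, c, n) (tedges S) \<longrightarrow> (p', c2, ch) \<in> insert (tx, c, n) (tedges S) \<longrightarrow> p = p' \<and> c1 = c2"
  proof (intro allI impI)
    fix p c1 ch p' c2 assume a: "(p, c1, ch) \<in> insert (tx, c, n) (tedges S)" "(p', c2, ch) \<in> insert (tx, c, n) (tedges S)"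
    show "p = p' \<and> c1 = c2"
    proof (cases "ch = n")
      case True
      have "(p, c1, ch) \<notin> tedges S" "(p', c2, ch) \<notin> tedges S" using I1 True by blast+
      thus ?thesis using a by auto
    next
      case False
      hence "(p, c1, ch) \<in> tedges S" "(p', c2, ch) \<in> tedges S" using a by auto
      thus ?thesis using I2 by blast
    qed
  qed
  have C4: "\<forall>z z' p. ((vis S)(y \<mapsto> n)) z = Some p \<longrightarrow> ((vis S)(y \<mapsto> n)) z' = Some p \<longrightarrow> z = z'"
  proof (intro allI impI)
    fix z z' p assume a: "((vis S)(y \<mapsto> n)) z = Some p" "((vis S)(y \<mapsto> n)) z' = Some p"
    show "z = z'"
    proof (cases "z = y \<or> z' = y")
      case True
      thus ?thesis
      proof
        assume zy: "z = y"
        hence "p = n" using a by simp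
        show ?thesis
        proof (rule ccontr)
          assume "z \<noteq> z'" hence "vis S z' = Some n" using a zy \<open>p = n\<close> by simp
          thus False using I3 by blast
        qed
      next
        assume zy: "z' = y"
        hence "p = n" using a by simp
        show ?thesis
        proof (rule ccontr)
          assume "z \<noteq> z'" hence "vis S z = Some n" using a zy \<open>p = n\<close> by simp
          thus False using I3 by blast
        qed
      qed
    next
      case False thus ?thesis using a I4 by auto
    qed
  qed
  have C5: "\<forall>z t. (z, t) \<in> set ((y, n) # (x, tx) # rest) \<longrightarrow> ((vis S)(y \<mapsto> n)) z = Some t"
  proof (intro allI impI)
    fix z t assume zt: "(z, t) \<in> set ((y, n) # (x, tx) # rest)"
    show "((vis S)(y \<mapsto> n)) z = Some t"
    proof (cases "(z, t) = (y, n)")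
      case True thus ?thesis by simp
    next
      case False
      hence "(z, t) \<in> set (stk S)" using zt st(1) by auto
      hence "vis S z = Some t" using I5 by blast
      moreover hence "z \<noteq> y" using st(4) by auto
      ultimately show ?thesis by simp
    qed
  qed
  have C7: "\<forall>z y'. ((vis S)(y \<mapsto> n)) z \<noteq> None \<longrightarrow> z \<notin> fst ` set ((y, n) # (x, tx) # rest) \<longrightarrow> E (z, y') \<noteq> None \<longrightarrow> (z, y') \<in> insert (x, y) (expl S)"
  proof (intro allI impI)
    fix z y' assume a: "((vis S)(y \<mapsto> n)) z \<noteq> None" "z \<notin> fst ` set ((y, n) # (x, tx) # rest)" "E (z, y') \<noteq> None"
    have "z \<noteq> y" using a(2) by simp
    hence "vis S z \<noteq> None" using a(1) by simp
    moreover have "z \<notin> fst ` set (stk S)" using a(2) unfolding st(1) by simp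
    ultimately have "(z, y') \<in> expl S" using I7[rule_format, of z y'] a(3) by simp
    thus "(z, y') \<in> insert (x, y) (expl S)" by simp
  qed
  have C8: "\<forall>z p. ((vis S)(y \<mapsto> n)) z = Some p \<longrightarrow> (\<exists>vs u. is_path (insert (tx, c, n) (tedges S)) vs u \<and> length u = q - 1 \<and> last vs = p \<and>
        u \<in> qgrams (q - 1) T \<and> \<phi> u = z)"
  proof (intro allI impI)
    fix z p assume zp: "((vis S)(y \<mapsto> n)) z = Some p"
    show "\<exists>vs u. is_path (insert (tx, c, n) (tedges S)) vs u \<and> length u = q - 1 \<and> last vs = p \<and>
        u \<in> qgrams (q - 1) T \<and> \<phi> u = z"
    proof (cases "z = y")
      case True
      hence pn: "p = n" using zp by simp
      obtain vs u where P: "is_path (tedges S) vs u" "length u = q - 1" "last vs = tx"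
        "u \<in> qgrams (q - 1) T" "\<phi> u = x" using I8 vx by blast
      have "is_path (insert (tx, c, n) (tedges S)) vs u" using path_mono[OF P(1)] by blast
      from new_path[OF GA CF q2 this P(2-5) st(2)] show ?thesis using True pn by simp
    next
      case False
      hence "vis S z = Some p" using zp by simp
      then obtain vs u where P: "is_path (tedges S) vs u" "length u = q - 1" "last vs = p"
        "u \<in> qgrams (q - 1) T" "\<phi> u = z" using I8 by blast
      thus ?thesis using path_mono[OF P(1), of "insert (tx, c, n) (tedges S)"] by blast
    qed
  qed
  have C9: "\<forall>p c' v. (p, c', v) \<in> insert (tx, c, n) (tedges S) \<longrightarrow> q \<le> v \<longrightarrow>
        (\<exists>xb y' m. ((vis S)(y \<mapsto> n)) xb = Some p \<and> ((tlab S)(n \<mapsto> y)) v = Some y' \<and> (xb, y') \<in> insert (x, y) (expl S) \<and> E (xb, y') = Some (c', m))"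
  proof (intro allI impI)
    fix p c' v assume e: "(p, c', v) \<in> insert (tx, c, n) (tedges S)" and qv: "q \<le> v"
    show "\<exists>xb y' m. ((vis S)(y \<mapsto> n)) xb = Some p \<and> ((tlab S)(n \<mapsto> y)) v = Some y' \<and> (xb, y') \<in> insert (x, y) (expl S) \<and> E (xb, y') = Some (c', m)"
    proof (cases "(p, c', v) = (tx, c, n)")
      case True thus ?thesis using vx xy st(2) by (intro exI[of _ x] exI[of _ y] exI[of _ m]) auto
    next
      case False
      hence e': "(p, c', v) \<in> tedges S" using e by blast
      hence vn: "v < n" using I1 by blast
      obtain x' y' m' where h: "vis S x' = Some p" "tlab S v = Some y'" "(x', y') \<in> expl S" "E (x', y') = Some (c', m')"
        using I9 e' qv by blast
      have "x' \<noteq> y" using h(1) st(4) by auto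
      thus ?thesis using h vn by (intro exI[of _ x'] exI[of _ y'] exI[of _ m']) auto
    qed
  qed
  have C10: "\<forall>p c1 v c2 v'. (p, c1, v) \<in> insert (tx, c, n) (tedges S) \<longrightarrow> (p, c2, v') \<in> insert (tx, c, n) (tedges S) \<longrightarrow> q \<le> v \<longrightarrow> q \<le> v' \<longrightarrow>
        ((tlab S)(n \<mapsto> y)) v = ((tlab S)(n \<mapsto> y)) v' \<longrightarrow> v = v'"
  proof (intro allI impI)
    fix p c1 v c2 v'
    assume e1: "(p, c1, v) \<in> insert (tx, c, n) (tedges S)" and e2: "(p, c2, v') \<in> insert (tx, c, n) (tedges S)"
      and q1: "q \<le> v" and q2': "q \<le> v'" and tl: "((tlab S)(n \<mapsto> y)) v = ((tlab S)(n \<mapsto> y)) v'"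
    have old: False if a: "(tx, c1', n) \<in> insert (tx, c, n) (tedges S)" "(tx, c2', w) \<in> tedges S" "q \<le> w"
       "((tlab S)(n \<mapsto> y)) n = ((tlab S)(n \<mapsto> y)) w" for c1' c2' w
    proof -
      have wn: "w < n" using I1 a(2) by blast
      obtain x' y' m' where h: "vis S x' = Some tx" "tlab S w = Some y'" "(x', y') \<in> expl S"
        using I9 a(2,3) by blast
      have "y' = y" using a(4) h(2) wn by simp
      moreover have "x' = x" using I4 h(1) vx by blast
      ultimately show False using h(3) st(3) by simp
    qed
    show "v = v'"
    proof (cases "v = n")
      case True
      show ?thesis
      proof (rule ccontr)
        assume "v \<noteq> v'"
        hence "(p, c2, v') \<in> tedges S" using e2 True by auto
        moreover have "p = tx" using e1 True I1 by auto
        ultimately show False using old[of c1 c2 v'] e1 True q2' tl by simp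
      qed
    next
      case False
      hence e1': "(p, c1, v) \<in> tedges S" using e1 by auto
      show ?thesis
      proof (cases "v' = n")
        case True
        hence "p = tx" using e2 I1 by auto
        thus ?thesis using old[of c2 c1 v] e2 e1' True q1 tl by simp
      next
        case False
        hence "(p, c2, v') \<in> tedges S" using e2 by auto
        moreover have "v < n" "v' < n" using e1' calculation I1 by blast+
        ultimately show ?thesis using I10 e1' q1 q2' tl by auto
      qed
    qed
  qed
  have C11: "\<forall>x' y'. (x', y') \<in> insert (x, y) (expl S) \<longrightarrow> (\<exists>p c' v m. ((vis S)(y \<mapsto> n)) x' = Some p \<and> (p, c', v) \<in> insert (tx, c, n) (tedges S) \<and> q \<le> v \<and> E (x', y') = Some (c', m))"
  proof (intro allI impI)
    fix x' y' assume "(x', y') \<in> insert (x, y) (expl S)"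
    thus "\<exists>p c' v m. ((vis S)(y \<mapsto> n)) x' = Some p \<and> (p, c', v) \<in> insert (tx, c, n) (tedges S) \<and> q \<le> v \<and> E (x', y') = Some (c', m)"
    proof
      assume "(x', y') = (x, y)"
      thus ?thesis using vx xy st(2) I0 by (intro exI[of _ tx] exI[of _ c] exI[of _ n] exI[of _ m]) auto
    next
      assume "(x', y') \<in> expl S"
      then obtain p c' v m' where h: "vis S x' = Some p" "(p, c', v) \<in> tedges S" "q \<le> v" "E (x', y') = Some (c', m')"
        using I11 by blast
      have "x' \<noteq> y" using h(1) st(4) by auto
      thus ?thesis using h by (intro exI[of _ p] exI[of _ c'] exI[of _ v] exI[of _ m']) auto
    qed
  qed
  show ?thesis unfolding dinv_def f
    apply (intro conjI)
    subgoal using I0 by simp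
    subgoal using txn by (auto dest: I1[rule_format])
    subgoal by (rule C2)
    subgoal by (auto dest: I3[rule_format])
    subgoal by (rule C4)
    subgoal by (rule C5)
    subgoal by (auto dest: I6[rule_format])
    subgoal by (rule C7)
    subgoal by (rule C8)
    subgoal by (rule C9)
    subgoal by (rule C10)
    subgoal by (rule C11)
    subgoal using I12 by auto
    done
qed

lemma step_leaf:
  assumes inv: "dinv \<phi> q T E S"
    and GA: "\<forall>x y c m. E (x, y) = Some (c, m) \<longrightarrow> (\<exists>w \<in> qgrams q T. x = \<phi> (take (q - 1) w) \<and> y = \<phi> (drop 1 w) \<and> c = w ! (q - 1))"
    and CF: "collision_free \<phi> q T" and q2: "2 \<le> q"
    and st: "stk S = (x, tx) # rest" "E (x, y) = Some (c, m)" "(x, y) \<notin> expl S" "vis S y \<noteq> None"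
  shows "dinv \<phi> q T E (S\<lparr> tn := Suc (tn S), tedges := insert (tx, c, tn S) (tedges S),
             tcnt := (tcnt S)(tn S \<mapsto> m), tlab := (tlab S)(tn S \<mapsto> y),
             expl := insert (x, y) (expl S) \<rparr>)" (is "dinv \<phi> q T E ?S'")
proof -
  define n where "n = tn S"
  have f: "tn ?S' = Suc n" "tedges ?S' = insert (tx, c, n) (tedges S)" "tlab ?S' = (tlab S)(n \<mapsto> y)"
    "vis ?S' = vis S" "stk ?S' = stk S" "expl ?S' = insert (x, y) (expl S)"
    by (simp_all add: n_def)
  note Iall = inv[unfolded dinv_def n_def[symmetric]]
  have I0: "q \<le> n" by (rule Iall[THEN conjunct1])
  have I1: "\<forall>p c ch. (p, c, ch) \<in> tedges S \<longrightarrow> p < ch \<and> ch < n" by (rule Iall[THEN conjunct2, THEN conjunct1])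
  have I2: "\<forall>p c ch p' c'. (p, c, ch) \<in> tedges S \<longrightarrow> (p', c', ch) \<in> tedges S \<longrightarrow> p = p' \<and> c = c'" by (rule Iall[THEN conjunct2, THEN conjunct2, THEN conjunct1])
  have I3: "\<forall>x p. vis S x = Some p \<longrightarrow> p < n" by (rule Iall[THEN conjunct2, THEN conjunct2, THEN conjunct2, THEN conjunct1])
  have I4: "\<forall>x x' p. vis S x = Some p \<longrightarrow> vis S x' = Some p \<longrightarrow> x = x'" by (rule Iall[THEN conjunct2, THEN conjunct2, THEN conjunct2, THEN conjunct2, THEN conjunct1])
  have I5: "\<forall>x tx. (x, tx) \<in> set (stk S) \<longrightarrow> vis S x = Some tx" by (rule Iall[THEN conjunct2, THEN conjunct2, THEN conjunct2, THEN conjunct2, THEN conjunct2, THEN conjunct1])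
  have I6: "\<forall>x y. (x, y) \<in> expl S \<longrightarrow> vis S y \<noteq> None" by (rule Iall[THEN conjunct2, THEN conjunct2, THEN conjunct2, THEN conjunct2, THEN conjunct2, THEN conjunct2, THEN conjunct1])
  have I7: "\<forall>x y. vis S x \<noteq> None \<longrightarrow> x \<notin> fst ` set (stk S) \<longrightarrow> E (x, y) \<noteq> None \<longrightarrow> (x, y) \<in> expl S" by (rule Iall[THEN conjunct2, THEN conjunct2, THEN conjunct2, THEN conjunct2, THEN conjunct2, THEN conjunct2, THEN conjunct2, THEN conjunct1])
  have I8: "\<forall>x p. vis S x = Some p \<longrightarrow> (\<exists>vs u. is_path (tedges S) vs u \<and> length u = q - 1 \<and> last vs = p \<and>
        u \<in> qgrams (q - 1) T \<and> \<phi> u = x)" using Iall by blast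
  have I9: "\<forall>p c v. (p, c, v) \<in> tedges S \<longrightarrow> q \<le> v \<longrightarrow>
        (\<exists>x y m. vis S x = Some p \<and> tlab S v = Some y \<and> (x, y) \<in> expl S \<and> E (x, y) = Some (c, m))" using Iall by blast
  have I10: "\<forall>p c v c' v'. (p, c, v) \<in> tedges S \<longrightarrow> (p, c', v') \<in> tedges S \<longrightarrow> q \<le> v \<longrightarrow> q \<le> v' \<longrightarrow>
        tlab S v = tlab S v' \<longrightarrow> v = v'" using Iall by blast
  have I11: "\<forall>x y. (x, y) \<in> expl S \<longrightarrow> (\<exists>p c v m. vis S x = Some p \<and> (p, c, v) \<in> tedges S \<and> q \<le> v \<and> E (x, y) = Some (c, m))" by (rule Iall[THEN conjunct2, THEN conjunct2, THEN conjunct2, THEN conjunct2, THEN conjunct2, THEN conjunct2, THEN conjunct2, THEN conjunct2, THEN conjunct2, THEN conjunct2, THEN conjunct2, THEN conjunct1])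
  have I12: "vis S (\<phi> (take (q - 1) T)) \<noteq> None" by (rule Iall[THEN conjunct2, THEN conjunct2, THEN conjunct2, THEN conjunct2, THEN conjunct2, THEN conjunct2, THEN conjunct2, THEN conjunct2, THEN conjunct2, THEN conjunct2, THEN conjunct2, THEN conjunct2])
  have vx: "vis S x = Some tx" using I5 st(1) by simp
  have txn: "tx < n" using I3 vx by blast
  have C2: "\<forall>p c1 ch p' c2. (p, c1, ch) \<in> insert (tx, c, n) (tedges S) \<longrightarrow> (p', c2, ch) \<in> insert (tx, c, n) (tedges S) \<longrightarrow> p = p' \<and> c1 = c2"
  proof (intro allI impI)
    fix p c1 ch p' c2 assume a: "(p, c1, ch) \<in> insert (tx, c, n) (tedges S)" "(p', c2, ch) \<in> insert (tx, c, n) (tedges S)"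
    show "p = p' \<and> c1 = c2"
    proof (cases "ch = n")
      case True
      have "(p, c1, ch) \<notin> tedges S" "(p', c2, ch) \<notin> tedges S" using I1 True by blast+
      thus ?thesis using a by auto
    next
      case False
      hence "(p, c1, ch) \<in> tedges S" "(p', c2, ch) \<in> tedges S" using a by auto
      thus ?thesis using I2 by blast
    qed
  qed
  have C7: "\<forall>z y'. vis S z \<noteq> None \<longrightarrow> z \<notin> fst ` set (stk S) \<longrightarrow> E (z, y') \<noteq> None \<longrightarrow> (z, y') \<in> insert (x, y) (expl S)"
    using I7 by blast
  have C8: "\<forall>z p. vis S z = Some p \<longrightarrow> (\<exists>vs u. is_path (insert (tx, c, n) (tedges S)) vs u \<and> length u = q - 1 \<and> last vs = p \<and>
        u \<in> qgrams (q - 1) T \<and> \<phi> u = z)"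
  proof (intro allI impI)
    fix z p assume zp: "vis S z = Some p"
    then obtain vs u where P: "is_path (tedges S) vs u" "length u = q - 1" "last vs = p"
        "u \<in> qgrams (q - 1) T" "\<phi> u = z" using I8 by blast
    thus "\<exists>vs u. is_path (insert (tx, c, n) (tedges S)) vs u \<and> length u = q - 1 \<and> last vs = p \<and>
        u \<in> qgrams (q - 1) T \<and> \<phi> u = z" using path_mono[OF P(1), of "insert (tx, c, n) (tedges S)"] by blast
  qed
  have C9: "\<forall>p c' v. (p, c', v) \<in> insert (tx, c, n) (tedges S) \<longrightarrow> q \<le> v \<longrightarrow>
        (\<exists>xb y' m. vis S xb = Some p \<and> ((tlab S)(n \<mapsto> y)) v = Some y' \<and> (xb, y') \<in> insert (x, y) (expl S) \<and> E (xb, y') = Some (c', m))"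
  proof (intro allI impI)
    fix p c' v assume e: "(p, c', v) \<in> insert (tx, c, n) (tedges S)" and qv: "q \<le> v"
    show "\<exists>xb y' m. vis S xb = Some p \<and> ((tlab S)(n \<mapsto> y)) v = Some y' \<and> (xb, y') \<in> insert (x, y) (expl S) \<and> E (xb, y') = Some (c', m)"
    proof (cases "(p, c', v) = (tx, c, n)")
      case True thus ?thesis using vx st(2) by (intro exI[of _ x] exI[of _ y] exI[of _ m]) auto
    next
      case False
      hence e': "(p, c', v) \<in> tedges S" using e by blast
      hence vn: "v < n" using I1 by blast
      obtain x' y' m' where h: "vis S x' = Some p" "tlab S v = Some y'" "(x', y') \<in> expl S" "E (x', y') = Some (c', m')"
        using I9 e' qv by blast
      thus ?thesis using vn by (intro exI[of _ x'] exI[of _ y'] exI[of _ m']) auto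
    qed
  qed
  have C10: "\<forall>p c1 v c2 v'. (p, c1, v) \<in> insert (tx, c, n) (tedges S) \<longrightarrow> (p, c2, v') \<in> insert (tx, c, n) (tedges S) \<longrightarrow> q \<le> v \<longrightarrow> q \<le> v' \<longrightarrow>
        ((tlab S)(n \<mapsto> y)) v = ((tlab S)(n \<mapsto> y)) v' \<longrightarrow> v = v'"
  proof (intro allI impI)
    fix p c1 v c2 v'
    assume e1: "(p, c1, v) \<in> insert (tx, c, n) (tedges S)" and e2: "(p, c2, v') \<in> insert (tx, c, n) (tedges S)"
      and q1: "q \<le> v" and q2': "q \<le> v'" and tl: "((tlab S)(n \<mapsto> y)) v = ((tlab S)(n \<mapsto> y)) v'"
    have old: False if a: "(tx, c1', n) \<in> insert (tx, c, n) (tedges S)" "(tx, c2', w) \<in> tedges S" "q \<le> w"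
       "((tlab S)(n \<mapsto> y)) n = ((tlab S)(n \<mapsto> y)) w" for c1' c2' w
    proof -
      have wn: "w < n" using I1 a(2) by blast
      obtain x' y' m' where h: "vis S x' = Some tx" "tlab S w = Some y'" "(x', y') \<in> expl S"
        using I9 a(2,3) by blast
      have "y' = y" using a(4) h(2) wn by simp
      moreover have "x' = x" using I4 h(1) vx by blast
      ultimately show False using h(3) st(3) by simp
    qed
    show "v = v'"
    proof (cases "v = n")
      case True
      show ?thesis
      proof (rule ccontr)
        assume "v \<noteq> v'"
        hence "(p, c2, v') \<in> tedges S" using e2 True by auto
        moreover have "p = tx" using e1 True I1 by auto
        ultimately show False using old[of c1 c2 v'] e1 True q2' tl by simp
      qed
    next
      case False
      hence e1': "(p, c1, v) \<in> tedges S" using e1 by auto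
      show ?thesis
      proof (cases "v' = n")
        case True
        hence "p = tx" using e2 I1 by auto
        thus ?thesis using old[of c2 c1 v] e2 e1' True q1 tl by simp
      next
        case False
        hence "(p, c2, v') \<in> tedges S" using e2 by auto
        moreover have "v < n" "v' < n" using e1' calculation I1 by blast+
        ultimately show ?thesis using I10 e1' q1 q2' tl by auto
      qed
    qed
  qed
  have C11: "\<forall>x' y'. (x', y') \<in> insert (x, y) (expl S) \<longrightarrow> (\<exists>p c' v m. vis S x' = Some p \<and> (p, c', v) \<in> insert (tx, c, n) (tedges S) \<and> q \<le> v \<and> E (x', y') = Some (c', m))"
  proof (intro allI impI)
    fix x' y' assume "(x', y') \<in> insert (x, y) (expl S)"
    thus "\<exists>p c' v m. vis S x' = Some p \<and> (p, c', v) \<in> insert (tx, c, n) (tedges S) \<and> q \<le> v \<and> E (x', y') = Some (c', m)"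
    proof
      assume "(x', y') = (x, y)"
      thus ?thesis using vx st(2) I0 by (intro exI[of _ tx] exI[of _ c] exI[of _ n] exI[of _ m]) auto
    next
      assume "(x', y') \<in> expl S"
      then obtain p c' v m' where h: "vis S x' = Some p" "(p, c', v) \<in> tedges S" "q \<le> v" "E (x', y') = Some (c', m')"
        using I11 by blast
      thus ?thesis by (intro exI[of _ p] exI[of _ c'] exI[of _ v] exI[of _ m']) auto
    qed
  qed
  show ?thesis unfolding dinv_def f
    apply (intro conjI)
    subgoal using I0 by simp
    subgoal using txn by (auto dest: I1[rule_format])
    subgoal by (rule C2)
    subgoal by (auto dest: I3[rule_format])
    subgoal by (rule I4)
    subgoal by (rule I5)
    subgoal using st(4) by (auto dest: I6[rule_format])
    subgoal by (rule C7)
    subgoal by (rule C8)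
    subgoal by (rule C9)
    subgoal by (rule C10)
    subgoal by (rule C11)
    subgoal using I12 by auto
    done
qed

lemma step_finish:
  assumes inv: "dinv \<phi> q T E S"
    and GA: "\<forall>x y c m. E (x, y) = Some (c, m) \<longrightarrow> (\<exists>w \<in> qgrams q T. x = \<phi> (take (q - 1) w) \<and> y = \<phi> (drop 1 w) \<and> c = w ! (q - 1))"
    and CF: "collision_free \<phi> q T" and q2: "2 \<le> q"
    and st: "stk S = (x, tx) # rest" "\<forall>y. E (x, y) \<noteq> None \<longrightarrow> (x, y) \<in> expl S"
  shows "dinv \<phi> q T E (S\<lparr> stk := rest \<rparr>)"
proof -
  define n where "n = tn S"
  note Iall = inv[unfolded dinv_def n_def[symmetric]]
  have I0: "q \<le> n" by (rule Iall[THEN conjunct1])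
  have I1: "\<forall>p c ch. (p, c, ch) \<in> tedges S \<longrightarrow> p < ch \<and> ch < n" by (rule Iall[THEN conjunct2, THEN conjunct1])
  have I2: "\<forall>p c ch p' c'. (p, c, ch) \<in> tedges S \<longrightarrow> (p', c', ch) \<in> tedges S \<longrightarrow> p = p' \<and> c = c'" by (rule Iall[THEN conjunct2, THEN conjunct2, THEN conjunct1])
  have I3: "\<forall>x p. vis S x = Some p \<longrightarrow> p < n" by (rule Iall[THEN conjunct2, THEN conjunct2, THEN conjunct2, THEN conjunct1])
  have I4: "\<forall>x x' p. vis S x = Some p \<longrightarrow> vis S x' = Some p \<longrightarrow> x = x'" by (rule Iall[THEN conjunct2, THEN conjunct2, THEN conjunct2, THEN conjunct2, THEN conjunct1])
  have I5: "\<forall>x tx. (x, tx) \<in> set (stk S) \<longrightarrow> vis S x = Some tx" by (rule Iall[THEN conjunct2, THEN conjunct2, THEN conjunct2, THEN conjunct2, THEN conjunct2, THEN conjunct1])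
  have I6: "\<forall>x y. (x, y) \<in> expl S \<longrightarrow> vis S y \<noteq> None" by (rule Iall[THEN conjunct2, THEN conjunct2, THEN conjunct2, THEN conjunct2, THEN conjunct2, THEN conjunct2, THEN conjunct1])
  have I7: "\<forall>x y. vis S x \<noteq> None \<longrightarrow> x \<notin> fst ` set (stk S) \<longrightarrow> E (x, y) \<noteq> None \<longrightarrow> (x, y) \<in> expl S" by (rule Iall[THEN conjunct2, THEN conjunct2, THEN conjunct2, THEN conjunct2, THEN conjunct2, THEN conjunct2, THEN conjunct2, THEN conjunct1])
  have I8: "\<forall>x p. vis S x = Some p \<longrightarrow> (\<exists>vs u. is_path (tedges S) vs u \<and> length u = q - 1 \<and> last vs = p \<and>
        u \<in> qgrams (q - 1) T \<and> \<phi> u = x)" using Iall by blast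
  have I9: "\<forall>p c v. (p, c, v) \<in> tedges S \<longrightarrow> q \<le> v \<longrightarrow>
        (\<exists>x y m. vis S x = Some p \<and> tlab S v = Some y \<and> (x, y) \<in> expl S \<and> E (x, y) = Some (c, m))" using Iall by blast
  have I10: "\<forall>p c v c' v'. (p, c, v) \<in> tedges S \<longrightarrow> (p, c', v') \<in> tedges S \<longrightarrow> q \<le> v \<longrightarrow> q \<le> v' \<longrightarrow>
        tlab S v = tlab S v' \<longrightarrow> v = v'" using Iall by blast
  have I11: "\<forall>x y. (x, y) \<in> expl S \<longrightarrow> (\<exists>p c v m. vis S x = Some p \<and> (p, c, v) \<in> tedges S \<and> q \<le> v \<and> E (x, y) = Some (c, m))" by (rule Iall[THEN conjunct2, THEN conjunct2, THEN conjunct2, THEN conjunct2, THEN conjunct2, THEN conjunct2, THEN conjunct2, THEN conjunct2, THEN conjunct2, THEN conjunct2, THEN conjunct2, THEN conjunct1])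
  have I12: "vis S (\<phi> (take (q - 1) T)) \<noteq> None" by (rule Iall[THEN conjunct2, THEN conjunct2, THEN conjunct2, THEN conjunct2, THEN conjunct2, THEN conjunct2, THEN conjunct2, THEN conjunct2, THEN conjunct2, THEN conjunct2, THEN conjunct2, THEN conjunct2])
  have C5: "\<forall>z t. (z, t) \<in> set rest \<longrightarrow> vis S z = Some t" using I5 st(1) by simp
  have C7: "\<forall>z y'. vis S z \<noteq> None \<longrightarrow> z \<notin> fst ` set rest \<longrightarrow> E (z, y') \<noteq> None \<longrightarrow> (z, y') \<in> expl S"
  proof (intro allI impI)
    fix z y' assume a: "vis S z \<noteq> None" "z \<notin> fst ` set rest" "E (z, y') \<noteq> None"
    show "(z, y') \<in> expl S"
    proof (cases "z = x")
      case True thus ?thesis using st(2) a(3) by blast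
    next
      case False
      hence "z \<notin> fst ` set (stk S)" using a(2) unfolding st(1) by simp
      thus ?thesis using I7[rule_format, of z y'] a by simp
    qed
  qed
  have f: "tn (S\<lparr> stk := rest \<rparr>) = n" "tedges (S\<lparr> stk := rest \<rparr>) = tedges S" "tlab (S\<lparr> stk := rest \<rparr>) = tlab S"
    "vis (S\<lparr> stk := rest \<rparr>) = vis S" "stk (S\<lparr> stk := rest \<rparr>) = rest" "expl (S\<lparr> stk := rest \<rparr>) = expl S"
    by (simp_all add: n_def)
  show ?thesis unfolding dinv_def f
    apply (intro conjI)
    subgoal by (rule I0)
    subgoal by (rule I1)
    subgoal by (rule I2)
    subgoal by (rule I3)
    subgoal by (rule I4)
    subgoal by (rule C5)
    subgoal by (rule I6)
    subgoal by (rule C7)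
    subgoal by (rule I8)
    subgoal by (rule I9)
    subgoal by (rule I10)
    subgoal by (rule I11)
    subgoal by (rule I12)
    done
qed


lemma dinv_star:
  assumes GA: "\<forall>x y c m. E (x, y) = Some (c, m) \<longrightarrow> (\<exists>w \<in> qgrams q T. x = \<phi> (take (q - 1) w) \<and> y = \<phi> (drop 1 w) \<and> c = w ! (q - 1))"
    and CF: "collision_free \<phi> q T" and q2: "2 \<le> q"
  shows "(dfs_step E)\<^sup>*\<^sup>* S0 S \<Longrightarrow> dinv \<phi> q T E S0 \<Longrightarrow> dinv \<phi> q T E S"
proof (induction rule: rtranclp_induct)
  case base thus ?case by simp
next
  case (step S1 S2)
  have i1: "dinv \<phi> q T E S1" using step by simp
  from step(2) show ?case
  proof (cases rule: dfs_step.cases)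
    case (tree_edge x tx rest y c m) thus ?thesis using step_tree[OF i1 GA CF q2] by blast
  next
    case (leaf_edge x tx rest y c m) thus ?thesis using step_leaf[OF i1 GA CF q2] by blast
  next
    case (finish x tx rest) thus ?thesis using step_finish[OF i1 GA CF q2] by blast
  qed
qed

lemma w_eq2: assumes "length w = q" "length s = q" "2 \<le> q" "take (q - 1) w = take (q - 1) s"
  "drop 1 w = drop 1 s" shows "w = s"
proof (rule w_eq[OF assms(1,2) _ assms(4)])
  show "1 \<le> q" using assms by simp
  have e: "1 + (q - 2) = q - 1" using assms(3) by simp
  have "drop 1 w ! (q - 2) = w ! (q - 1)" "drop 1 s ! (q - 2) = s ! (q - 1)"
    using nth_drop[of 1 w "q - 2"] nth_drop[of 1 s "q - 2"] e assms(1,2,3) by simp_all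
  thus "w ! (q - 1) = s ! (q - 1)" using assms(5) by metis
qed

lemma w_snoc: "length w = q \<Longrightarrow> 1 \<le> q \<Longrightarrow> take (q - 1) w @ [w ! (q - 1)] = w"
  using take_Suc_conv_app_nth[of "q - 1" w] by simp

lemma final_unique:
  assumes inv: "dinv \<phi> q T E C"
    and GA: "\<forall>x y c m. E (x, y) = Some (c, m) \<longrightarrow> (\<exists>w \<in> qgrams q T. x = \<phi> (take (q - 1) w) \<and> y = \<phi> (drop 1 w) \<and> c = w ! (q - 1))"
    and CF: "collision_free \<phi> q T" and q2: "2 \<le> q" and stk: "stk C = []"
    and GE: "\<forall>s \<in> qgrams q T. E (\<phi> (take (q - 1) s), \<phi> (drop 1 s)) \<noteq> None"
  shows "\<forall>s \<in> qgrams q T. \<exists>!vs. is_path (tedges C) vs s"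
proof
  note Iall = inv[unfolded dinv_def]
  have I1: "\<forall>p c ch. (p, c, ch) \<in> tedges C \<longrightarrow> p < ch \<and> ch < tn C" by (rule Iall[THEN conjunct2, THEN conjunct1])
  have I2: "\<forall>p c ch p' c'. (p, c, ch) \<in> tedges C \<longrightarrow> (p', c', ch) \<in> tedges C \<longrightarrow> p = p' \<and> c = c'" by (rule Iall[THEN conjunct2, THEN conjunct2, THEN conjunct1])
  have I6: "\<forall>x y. (x, y) \<in> expl C \<longrightarrow> vis C y \<noteq> None" by (rule Iall[THEN conjunct2, THEN conjunct2, THEN conjunct2, THEN conjunct2, THEN conjunct2, THEN conjunct2, THEN conjunct1])
  have I7: "\<forall>x y. vis C x \<noteq> None \<longrightarrow> x \<notin> fst ` set (stk C) \<longrightarrow> E (x, y) \<noteq> None \<longrightarrow> (x, y) \<in> expl C" by (rule Iall[THEN conjunct2, THEN conjunct2, THEN conjunct2, THEN conjunct2, THEN conjunct2, THEN conjunct2, THEN conjunct2, THEN conjunct1])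
  have I8: "\<forall>x p. vis C x = Some p \<longrightarrow> (\<exists>vs u. is_path (tedges C) vs u \<and> length u = q - 1 \<and> last vs = p \<and>
        u \<in> qgrams (q - 1) T \<and> \<phi> u = x)" using Iall by blast
  have I9: "\<forall>p c v. (p, c, v) \<in> tedges C \<longrightarrow> q \<le> v \<longrightarrow>
        (\<exists>x y m. vis C x = Some p \<and> tlab C v = Some y \<and> (x, y) \<in> expl C \<and> E (x, y) = Some (c, m))" using Iall by blast
  have I10: "\<forall>p c v c' v'. (p, c, v) \<in> tedges C \<longrightarrow> (p, c', v') \<in> tedges C \<longrightarrow> q \<le> v \<longrightarrow> q \<le> v' \<longrightarrow>
        tlab C v = tlab C v' \<longrightarrow> v = v'" using Iall by blast
  have I11: "\<forall>x y. (x, y) \<in> expl C \<longrightarrow> (\<exists>p c v m. vis C x = Some p \<and> (p, c, v) \<in> tedges C \<and> q \<le> v \<and> E (x, y) = Some (c, m))" by (rule Iall[THEN conjunct2, THEN conjunct2, THEN conjunct2, THEN conjunct2, THEN conjunct2, THEN conjunct2, THEN conjunct2, THEN conjunct2, THEN conjunct2, THEN conjunct2, THEN conjunct2, THEN conjunct1])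
  have I12: "vis C (\<phi> (take (q - 1) T)) \<noteq> None" by (rule Iall[THEN conjunct2, THEN conjunct2, THEN conjunct2, THEN conjunct2, THEN conjunct2, THEN conjunct2, THEN conjunct2, THEN conjunct2, THEN conjunct2, THEN conjunct2, THEN conjunct2, THEN conjunct2])
  have I7': "vis C x \<noteq> None \<Longrightarrow> E (x, y) \<noteq> None \<Longrightarrow> (x, y) \<in> expl C" for x y
    using I7 stk by simp
  have reach: "i + (q - 1) \<le> length T \<Longrightarrow> vis C (\<phi> (take (q - 1) (drop i T))) \<noteq> None" for i
  proof (induction i)
    case 0 thus ?case using I12 by simp
  next
    case (Suc i)
    define w where "w = take q (drop i T)"
    have "fac w T" unfolding w_def by (rule fac_take_drop_self)
    moreover have lw: "length w = q" using Suc.prems q2 unfolding w_def by simp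
    ultimately have wq: "w \<in> qgrams q T" using qgrams_iff[of q w T] q2 by simp
    have t1: "take (q - 1) w = take (q - 1) (drop i T)" unfolding w_def by (simp add: min_def)
    have t2: "drop 1 w = take (q - 1) (drop (Suc i) T)" unfolding w_def
      by (simp add: drop_take)
    have "vis C (\<phi> (take (q - 1) w)) \<noteq> None" using Suc t1 by simp
    hence "(\<phi> (take (q - 1) w), \<phi> (drop 1 w)) \<in> expl C" using I7' GE wq by blast
    hence "vis C (\<phi> (drop 1 w)) \<noteq> None" using I6 by blast
    thus ?case using t2 by simp
  qed
  fix s assume sq: "s \<in> qgrams q T"
  have ls: "length s = q" and "fac s T" using sq qgrams_iff[of q s T] q2 by auto
  then obtain ps ss where T: "T = ps @ s @ ss" unfolding fac_def by blast
  have "take (q - 1) (drop (length ps) T) = take (q - 1) s" using T ls by simp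
  moreover have "length ps + (q - 1) \<le> length T" using T ls by simp
  ultimately have vx: "vis C (\<phi> (take (q - 1) s)) \<noteq> None" using reach by metis
  define x where "x = \<phi> (take (q - 1) s)"
  define y where "y = \<phi> (drop 1 s)"
  have sq1: "take (q - 1) s \<in> qgrams (q - 1) T" and sq2: "drop 1 s \<in> qgrams (q - 1) T"
    using qg_take[OF q2 sq] qg_drop[OF q2 sq] by auto
  have "(x, y) \<in> expl C" using I7' vx GE sq unfolding x_def y_def by blast
  then obtain p0 c v m where h: "vis C x = Some p0" "(p0, c, v) \<in> tedges C" "q \<le> v" "E (x, y) = Some (c, m)"
    using I11 by blast
  have charac: "vs ! (q - 1) = p0 \<and> tlab C (vs ! q) = Some y \<and> q \<le> vs ! q \<and> (vs ! (q - 1), s ! (q - 1), vs ! q) \<in> tedges C"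
    if P: "is_path (tedges C) vs s" for vs
  proof -
    have lv: "length vs = Suc q" using P ls unfolding is_path_def by simp
    have qv: "q \<le> vs ! q" using path_incr[of "tedges C" vs s q] I1 P ls by auto
    have "q - 1 < length s" using ls q2 by simp
    hence "(vs ! (q - 1), s ! (q - 1), vs ! Suc (q - 1)) \<in> tedges C" using P unfolding is_path_def by blast
    moreover have "Suc (q - 1) = q" using q2 by simp
    ultimately have ed: "(vs ! (q - 1), s ! (q - 1), vs ! q) \<in> tedges C" by simp
    obtain x' y' m' where h': "vis C x' = Some (vs ! (q - 1))" "tlab C (vs ! q) = Some y'" "(x', y') \<in> expl C"
      "E (x', y') = Some (s ! (q - 1), m')" using I9 ed qv by blast
    have Pt: "is_path (tedges C) (take q vs) (take (q - 1) s)"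
      using path_take[OF P, of "q - 1"] ls q2 by simp
    have lt: "last (take q vs) = vs ! (q - 1)" using lv q2 last_len[of "take q vs" "q - 1"] by simp
    obtain vs' u' where P': "is_path (tedges C) vs' u'" "length u' = q - 1" "last vs' = vs ! (q - 1)"
      "u' \<in> qgrams (q - 1) T" "\<phi> u' = x'" using I8 h'(1) by blast
    have "take (q - 1) s = u'" using path_unique[OF I2 Pt P'(1)] P'(2,3) lt ls by simp
    hence x'x: "x' = x" using P'(5) unfolding x_def by simp
    obtain w where w: "w \<in> qgrams q T" "x' = \<phi> (take (q - 1) w)" "y' = \<phi> (drop 1 w)" "s ! (q - 1) = w ! (q - 1)"
      using GA h'(4) by blast
    have lw: "length w = q" using w(1) qgrams_iff[of q w T] q2 by simp
    have "take (q - 1) w = take (q - 1) s" using cf_eq[OF CF qg_take[OF q2 w(1)] sq1] w(2) x'x unfolding x_def by simp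
    hence "w = s" using w_eq[OF lw ls _ _ w(4)[symmetric]] q2 by simp
    hence "y' = y" using w(3) unfolding y_def by simp
    moreover have "vs ! (q - 1) = p0" using h'(1) h(1) x'x by simp
    ultimately show ?thesis using h' qv ed by simp
  qed
  obtain vs u where P: "is_path (tedges C) vs u" "length u = q - 1" "last vs = p0"
    "u \<in> qgrams (q - 1) T" "\<phi> u = x" using I8 h(1) by blast
  have ex: "is_path (tedges C) (vs @ [v]) s"
  proof -
    obtain w where w: "w \<in> qgrams q T" "x = \<phi> (take (q - 1) w)" "y = \<phi> (drop 1 w)" "c = w ! (q - 1)"
      using GA h(4) by blast
    have lw: "length w = q" using w(1) qgrams_iff[of q w T] q2 by simp
    have "u = take (q - 1) w" using cf_eq[OF CF P(4) qg_take[OF q2 w(1)]] P(5) w(2) by simp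
    moreover have "take (q - 1) w = take (q - 1) s" using cf_eq[OF CF qg_take[OF q2 w(1)] sq1] w(2) unfolding x_def by simp
    moreover have "drop 1 w = drop 1 s" using cf_eq[OF CF qg_drop[OF q2 w(1)] sq2] w(3) unfolding y_def by simp
    ultimately have us: "u = take (q - 1) s" and wsx: "w = s" using w_eq2[OF lw ls q2] by auto
    have "is_path (tedges C) (vs @ [v]) (u @ [c])" using path_snoc[OF P(1)] P(3) h(2) by simp
    moreover have "u @ [c] = s" using us w(4) wsx w_snoc[OF ls] q2 by simp
    ultimately show "is_path (tedges C) (vs @ [v]) s" by simp
  qed
  show "\<exists>!vs. is_path (tedges C) vs s"
  proof (rule ex1I[of _ "vs @ [v]"])
    show "is_path (tedges C) (vs @ [v]) s" by (rule ex)
  next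
    fix vs1 assume P1: "is_path (tedges C) vs1 s"
    have c1: "vs1 ! (q - 1) = p0 \<and> tlab C (vs1 ! q) = Some y \<and> q \<le> vs1 ! q \<and> (vs1 ! (q - 1), s ! (q - 1), vs1 ! q) \<in> tedges C"
      by (rule charac[OF P1])
    have c2: "(vs @ [v]) ! (q - 1) = p0 \<and> tlab C ((vs @ [v]) ! q) = Some y \<and> q \<le> (vs @ [v]) ! q \<and> ((vs @ [v]) ! (q - 1), s ! (q - 1), (vs @ [v]) ! q) \<in> tedges C"
      by (rule charac[OF ex])
    have a1: "(p0, s ! (q - 1), vs1 ! q) \<in> tedges C" using c1 by auto
    have a2: "(p0, s ! (q - 1), (vs @ [v]) ! q) \<in> tedges C" using c2 by auto
    have eqq: "vs1 ! q = (vs @ [v]) ! q"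
      using I10[rule_format, OF a1 a2] c1 c2 by auto
    have l1: "length vs1 = Suc q" "length (vs @ [v]) = Suc q" using P1 ex ls unfolding is_path_def by auto
    have "last vs1 = last (vs @ [v])" using last_len[OF l1(1)] last_len[OF l1(2)] eqq by simp
    thus "vs1 = vs @ [v]" using path_unique[OF I2 P1 ex] by simp
  qed
qed


theorem lemma8:
  fixes rs :: "'a rule list" and q :: nat and \<phi> :: "'a list \<Rightarrow> 'f"
    and ord :: "nat list" and C :: "('a, 'f) dfs_state"
  assumes "2 \<le> q"
    and "slp_wf rs"
    and "\<forall>i < length rs. 0 < occ rs i"
    and "q \<le> length (slp_T rs)"
    and "collision_free \<phi> q (slp_T rs)"
    and "valid_order rs q ord"
    and "(dfs_step (snd (build_G \<phi> q rs ord)))\<^sup>*\<^sup>* (dfs_init \<phi> q (slp_T rs)) C"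
    and "stk C = []"
  shows "\<forall>s \<in> qgrams q (slp_T rs). \<exists>!vs. is_path (tedges C) vs s"
proof -
  have GA: "\<forall>x y c m. snd (build_G \<phi> q rs ord) (x, y) = Some (c, m) \<longrightarrow>
      (\<exists>w \<in> qgrams q (slp_T rs). x = \<phi> (take (q - 1) w) \<and> y = \<phi> (drop 1 w) \<and> c = w ! (q - 1))"
    by (intro allI impI) (rule graph_P[OF assms(1) assms(3) assms(6)])
  have GE: "\<forall>s \<in> qgrams q (slp_T rs). snd (build_G \<phi> q rs ord) (\<phi> (take (q - 1) s), \<phi> (drop 1 s)) \<noteq> None"
    by (intro ballI) (rule graph_E[OF assms(1) assms(3) assms(6)])
  have inv: "dinv \<phi> q (slp_T rs) (snd (build_G \<phi> q rs ord)) C"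
    by (rule dinv_star[OF GA assms(5) assms(1) assms(7) dinv_init[OF assms(1) assms(4)]])
  show ?thesis by (rule final_unique[OF inv GA assms(5) assms(1) assms(8) GE])
qed

end
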